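(* Let $n\ge 1$ and $d\ge 1$ be integers, let $\mathcal{X}\subset\mathbb{R}^d$ be compact and convex, let $\mathbf{x}_0\in\mathcal{X}$, let $w_0,w_1,\dots,w_n\in\mathbb{R}$, and let $\mathbf{t}_1,\dots,\mathbf{t}_n\in\mathbb{R}^d$. Consider the $n$-player game $G$ in which player $i\in[n]$ chooses $\mathbf{x}_i\in\mathcal{X}$ and incurs the loss $\ell_i(\mathbf{x}_1,\dots,\mathbf{x}_n)=\|w_0\mathbf{x}_0+\sum_{j=1}^n w_j\mathbf{x}_j-\mathbf{t}_i\|_2^2$. Then $G$ has either exactly one pure Nash equilibrium or infinitely many pure Nash equilibria.
   Context: A pure Nash equilibrium of $G$ is a profile $\mathbf{x}=(\mathbf{x}_1,\dots,\mathbf{x}_n)\in\mathcal{X}^n$ such that $\ell_i(\mathbf{x}_i,\mathbf{x}_{-i})\le\ell_i(\mathbf{y},\mathbf{x}_{-i})$ for all $\mathbf{y}\in\mathcal{X}$ and all $i\in[n]$, where $(\mathbf{y},\mathbf{x}_{-i})$ denotes the profile with player $i$'s action replaced by $\mathbf{y}$. *)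

theory Defs
  imports "HOL-Analysis.Analysis" "HOL-Library.FuncSet"
begin

definition pure_nash_equilibria ::
  "nat \<Rightarrow> 'a set \<Rightarrow> (nat \<Rightarrow> (nat \<Rightarrow> 'a) \<Rightarrow> real) \<Rightarrow> (nat \<Rightarrow> 'a) set" where
  "pure_nash_equilibria n X loss =
     {x \<in> Pi\<^sub>E {1..n} (\<lambda>_. X).
        \<forall>i\<in>{1..n}. \<forall>y\<in>X. loss i x \<le> loss i (x(i := y))}"

end

theory Submission
  imports Defs
begin

definition SS :: "nat \<Rightarrow> (nat \<Rightarrow> real) \<Rightarrow> real^'d \<Rightarrow> (nat \<Rightarrow> real^'d) \<Rightarrow> real^'d" where
  "SS n w x0 x = w 0 *\<^sub>R x0 + (\<Sum>j=1..n. w j *\<^sub>R x j)"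

definition Phi :: "nat \<Rightarrow> (nat \<Rightarrow> real) \<Rightarrow> real^'d \<Rightarrow> (nat \<Rightarrow> real^'d) \<Rightarrow> (nat \<Rightarrow> real^'d) \<Rightarrow> real" where
  "Phi n w x0 t x = (norm (SS n w x0 x))\<^sup>2 - 2 * (\<Sum>j=1..n. w j * (x j \<bullet> t j))"

lemma SS_cong: "(\<And>j. j \<in> {1..n} \<Longrightarrow> x j = y j) \<Longrightarrow> SS n w x0 x = SS n w x0 y"
  unfolding SS_def by (metis (no_types, lifting) sum.cong)

lemma Phi_cong: "(\<And>j. j \<in> {1..n} \<Longrightarrow> x j = y j) \<Longrightarrow> Phi n w x0 t x = Phi n w x0 t y"
  unfolding Phi_def using SS_cong[of n x y w x0] by (metis (no_types, lifting) sum.cong)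

lemma SS_add: "SS n w x0 (\<lambda>j. x j + h j) = SS n w x0 x + (\<Sum>j=1..n. w j *\<^sub>R h j)"
  unfolding SS_def by (simp add: scaleR_add_right sum.distrib algebra_simps)

lemma Phi_expand:
  "Phi n w x0 t (\<lambda>j. x j + h j) = Phi n w x0 t x
     + (\<Sum>j=1..n. 2 * w j * ((SS n w x0 x - t j) \<bullet> h j)) + (norm (\<Sum>j=1..n. w j *\<^sub>R h j))\<^sup>2"
proof -
  define A where "A = SS n w x0 x"
  define H where "H = (\<Sum>j=1..n. w j *\<^sub>R h j)"
  have AH: "A \<bullet> H = (\<Sum>j=1..n. w j * (A \<bullet> h j))"
    unfolding H_def by (simp add: inner_sum_right)
  have n2: "(norm (A + H))\<^sup>2 = (norm A)\<^sup>2 + 2 * (A \<bullet> H) + (norm H)\<^sup>2"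
    by (simp add: power2_norm_eq_inner inner_add_left inner_add_right inner_commute)
  have lin: "(\<Sum>j=1..n. w j * ((x j + h j) \<bullet> t j)) = (\<Sum>j=1..n. w j * (x j \<bullet> t j)) + (\<Sum>j=1..n. w j * (h j \<bullet> t j))"
    by (simp add: inner_add_left distrib_left sum.distrib)
  have lin2: "(\<Sum>j=1..n. 2 * w j * ((A - t j) \<bullet> h j)) = 2 * (\<Sum>j=1..n. w j * (A \<bullet> h j)) - 2 * (\<Sum>j=1..n. w j * (h j \<bullet> t j))"
    by (simp add: inner_diff_left inner_commute algebra_simps sum_subtractf sum_distrib_left)
  show ?thesis
    unfolding Phi_def SS_add A_def[symmetric] H_def[symmetric]
    using n2 lin lin2 AH by simp
qed

lemma Phi_upd:
  assumes "i \<in> {1..n}"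
  shows "(norm (SS n w x0 (x(i := y)) - t i))\<^sup>2 - (norm (SS n w x0 x - t i))\<^sup>2
         = Phi n w x0 t (x(i := y)) - Phi n w x0 t x"
proof -
  define h where "h = (\<lambda>j. if j = i then y - x i else 0)"
  have e: "\<And>j. (x(i:=y)) j = x j + h j" by (simp add: h_def)
  have eq: "x(i:=y) = (\<lambda>j. x j + h j)" using e by auto
  have H: "(\<Sum>j=1..n. w j *\<^sub>R h j) = w i *\<^sub>R (y - x i)"
    using assms by (simp add: h_def if_distrib sum.delta cong: if_cong)
  have L: "(\<Sum>j=1..n. 2 * w j * ((SS n w x0 x - t j) \<bullet> h j)) = 2 * w i * ((SS n w x0 x - t i) \<bullet> (y - x i))"
    using assms by (simp add: h_def if_distrib sum.delta cong: if_cong)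
  define u where "u = SS n w x0 x - t i"
  define d where "d = w i *\<^sub>R (y - x i)"
  have e1: "SS n w x0 (x(i := y)) - t i = u + d"
    unfolding eq SS_add H u_def d_def by simp
  have e2: "(norm (u + d))\<^sup>2 - (norm u)\<^sup>2 = 2 * (u \<bullet> d) + (norm d)\<^sup>2"
    by (simp add: power2_norm_eq_inner inner_add_left inner_add_right inner_commute)
  have e3: "Phi n w x0 t (x(i := y)) - Phi n w x0 t x = 2 * w i * (u \<bullet> (y - x i)) + (norm d)\<^sup>2"
    unfolding eq Phi_expand H L u_def d_def by simp
  have e4: "u \<bullet> d = w i * (u \<bullet> (y - x i))" unfolding d_def by simp
  show ?thesis unfolding u_def[symmetric] e1 using e2 e3 e4 by linarith
qed

lemma variational:
  fixes u a :: "real^'d"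
  assumes "convex X" "a \<in> X" "y \<in> X"
    and le: "\<And>z. z \<in> X \<Longrightarrow> (norm u)\<^sup>2 \<le> (norm (u + w *\<^sub>R (z - a)))\<^sup>2"
  shows "0 \<le> w * (u \<bullet> (y - a))"
proof (rule ccontr)
  define d where "d = y - a"
  define c where "c = w * (u \<bullet> d)"
  define q where "q = w\<^sup>2 * (norm d)\<^sup>2"
  assume "\<not> 0 \<le> w * (u \<bullet> (y - a))"
  hence c: "c < 0" unfolding c_def d_def by simp
  have key: "0 \<le> 2 * s * c + s\<^sup>2 * q" if s: "0 \<le> s" "s \<le> 1" for s
  proof -
    have "a + s *\<^sub>R d \<in> X"
      using convexD_alt[OF assms(1) assms(2) assms(3), of s] s unfolding d_def
      by (simp add: algebra_simps)
    from le[OF this] have "(norm u)\<^sup>2 \<le> (norm (u + (w * s) *\<^sub>R d))\<^sup>2" by simp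
    also have "(norm (u + (w * s) *\<^sub>R d))\<^sup>2 = (norm u)\<^sup>2 + 2 * s * c + s\<^sup>2 * q"
      unfolding c_def q_def power2_norm_eq_inner
      by (simp add: power2_norm_eq_inner inner_add_left inner_add_right inner_commute algebra_simps power2_eq_square)
    finally show ?thesis by simp
  qed
  have "0 \<le> 2 * c + q" using key[of 1] by simp
  hence q: "q > 0" using c by simp
  define s where "s = min 1 (- c / q)"
  have s0: "0 < s" "s \<le> 1" using c q by (auto simp: s_def divide_neg_pos)
  have "s * q \<le> - c" using q by (simp add: s_def min_def field_simps split: if_splits)
  hence "2 * c + s * q < 0" using c by simp
  hence "s * (2 * c + s * q) < 0" using s0 by (simp add: mult_pos_neg)
  moreover have "s * (2 * c + s * q) = 2 * s * c + s\<^sup>2 * q" by (simp add: algebra_simps power2_eq_square)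
  ultimately show False using key[of s] s0 by simp
qed

lemma Phi_cont: "continuous_on UNIV (Phi n w x0 t)"
  unfolding Phi_def SS_def
  by (intro continuous_intros continuous_on_product_coordinates)

lemma PiE_compact:
  fixes X :: "'a::topological_space set" and n :: nat
  assumes "compact X"
  shows "compact (Pi\<^sub>E {1..n} (\<lambda>_. X))"
proof -
  define S' where "S' = (\<lambda>j::nat. if j \<in> {1..n} then X else {undefined})"
  have eq: "Pi\<^sub>E {1..n} (\<lambda>_. X) = Pi\<^sub>E UNIV S'"
    unfolding S'_def PiE_def extensional_def Pi_def by auto
  have "compactin (product_topology (\<lambda>_. euclidean) UNIV) (Pi\<^sub>E UNIV S')"
    unfolding compactin_PiE using assms by (auto simp: S'_def)
  then show ?thesis unfolding eq euclidean_product_topology by simp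
qed

theorem corollary1:
  fixes n :: nat and X :: "(real ^ 'd) set" and x0 :: "real ^ 'd"
    and w :: "nat \<Rightarrow> real" and t :: "nat \<Rightarrow> real ^ 'd"
  assumes "n \<ge> 1"
    and "compact X" and "convex X" and "x0 \<in> X"
  shows "card (pure_nash_equilibria n X
            (\<lambda>i x. (norm (w 0 *\<^sub>R x0 + (\<Sum>j=1..n. w j *\<^sub>R x j) - t i))\<^sup>2)) = 1
       \<or> infinite (pure_nash_equilibria n X
            (\<lambda>i x. (norm (w 0 *\<^sub>R x0 + (\<Sum>j=1..n. w j *\<^sub>R x j) - t i))\<^sup>2))"
proof -
  define P where "P = Pi\<^sub>E {1..n} (\<lambda>_. X)"
  define F where "F = Phi n w x0 t"
  define NE where "NE = pure_nash_equilibria n X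
            (\<lambda>i x. (norm (w 0 *\<^sub>R x0 + (\<Sum>j=1..n. w j *\<^sub>R x j) - t i))\<^sup>2)"
  have NE_def': "NE = {x \<in> P. \<forall>i\<in>{1..n}. \<forall>y\<in>X.
      (norm (SS n w x0 x - t i))\<^sup>2 \<le> (norm (SS n w x0 (x(i:=y)) - t i))\<^sup>2}"
    unfolding NE_def pure_nash_equilibria_def P_def SS_def by simp
  have upd: "x(i:=y) \<in> P" if "x \<in> P" "i \<in> {1..n}" "y \<in> X" for x i y
    using that unfolding P_def by (auto simp: PiE_iff extensional_def)
  have NE_min: "F x \<le> F z" if x: "x \<in> NE" and z: "z \<in> P" for x z
  proof -
    have xP: "x \<in> P" using x NE_def' by auto
    have nonneg: "0 \<le> 2 * w j * ((SS n w x0 x - t j) \<bullet> (z j - x j))" if j: "j \<in> {1..n}" for j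
    proof -
      have le: "(norm (SS n w x0 x - t j))\<^sup>2 \<le> (norm (SS n w x0 x - t j + w j *\<^sub>R (y - x j)))\<^sup>2"
        if y: "y \<in> X" for y
      proof -
        have h: "x(j:=y) = (\<lambda>k. x k + (if k = j then y - x j else 0))" by auto
        have H: "(\<Sum>k=1..n. w k *\<^sub>R (if k = j then y - x j else 0)) = w j *\<^sub>R (y - x j)"
          using j by (simp add: if_distrib sum.delta cong: if_cong)
        have eqn: "SS n w x0 (x(j:=y)) - t j = SS n w x0 x - t j + w j *\<^sub>R (y - x j)"
          unfolding h SS_add H by simp
        have le0: "(norm (SS n w x0 x - t j))\<^sup>2 \<le> (norm (SS n w x0 (x(j:=y)) - t j))\<^sup>2"
          using x y j unfolding NE_def' by blast
        show ?thesis using le0 unfolding eqn .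
      qed
      have "x j \<in> X" "z j \<in> X" using xP z j unfolding P_def by auto
      from variational[OF assms(3) this le] show ?thesis by simp
    qed
    have "F (\<lambda>j. x j + (z j - x j)) = F x + (\<Sum>j=1..n. 2 * w j * ((SS n w x0 x - t j) \<bullet> (z j - x j)))
        + (norm (\<Sum>j=1..n. w j *\<^sub>R (z j - x j)))\<^sup>2"
      unfolding F_def by (rule Phi_expand)
    moreover have "(\<lambda>j. x j + (z j - x j)) = z" by auto
    moreover have "0 \<le> (\<Sum>j=1..n. 2 * w j * ((SS n w x0 x - t j) \<bullet> (z j - x j)))"
      using nonneg by (intro sum_nonneg) auto
    ultimately show ?thesis by simp
  qed
  have min_NE: "x \<in> NE" if x: "x \<in> P" "\<And>z. z \<in> P \<Longrightarrow> F x \<le> F z" for x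
  proof -
    have "(norm (SS n w x0 x - t i))\<^sup>2 \<le> (norm (SS n w x0 (x(i:=y)) - t i))\<^sup>2"
      if "i \<in> {1..n}" "y \<in> X" for i y
      using Phi_upd[OF that(1), of w x0 x y t] x(2)[OF upd[OF x(1) that]] unfolding F_def by linarith
    then show ?thesis using x(1) unfolding NE_def' by auto
  qed
  have NE_eq: "NE = {x \<in> P. \<forall>z\<in>P. F x \<le> F z}"
  proof (rule set_eqI)
    fix x show "x \<in> NE \<longleftrightarrow> x \<in> {x \<in> P. \<forall>z\<in>P. F x \<le> F z}"
    proof
      assume "x \<in> NE"
      moreover have "x \<in> P" using \<open>x \<in> NE\<close> unfolding NE_def' by simp
      ultimately show "x \<in> {x \<in> P. \<forall>z\<in>P. F x \<le> F z}" using NE_min by simp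
    next
      assume "x \<in> {x \<in> P. \<forall>z\<in>P. F x \<le> F z}"
      then show "x \<in> NE" using min_NE by simp
    qed
  qed
  have "P \<noteq> {}"
  proof -
    have "(\<lambda>j. if j \<in> {1..n} then x0 else undefined) \<in> P"
      using assms(4) unfolding P_def by auto
    then show ?thesis by auto
  qed
  moreover have "compact P" unfolding P_def using PiE_compact[OF assms(2)] .
  moreover have "continuous_on P F" unfolding F_def
    using continuous_on_subset[OF Phi_cont subset_UNIV] .
  ultimately obtain m where m: "m \<in> P" "\<forall>y\<in>P. F m \<le> F y"
    using continuous_attains_inf by blast
  have ne: "NE \<noteq> {}" using m NE_eq by auto
  have inf: "infinite NE" if x: "x \<in> NE" and z: "z \<in> NE" and xz: "x \<noteq> z" for x z
  proof -
    have xP: "x \<in> P" and zP: "z \<in> P" using x z NE_eq by auto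
    have Fxz: "F z = F x" using NE_eq x z by (simp add: order_antisym)
    obtain k where k: "k \<in> {1..n}" "x k \<noteq> z k"
      using xP zP xz unfolding P_def by (metis PiE_ext)
    define p where "p = (\<lambda>s::real. \<lambda>j. if j \<in> {1..n} then x j + s *\<^sub>R (z j - x j) else undefined)"
    define L where "L = (\<Sum>j=1..n. 2 * w j * ((SS n w x0 x - t j) \<bullet> (z j - x j)))"
    define Q where "Q = (norm (\<Sum>j=1..n. w j *\<^sub>R (z j - x j)))\<^sup>2"
    have Fp: "F (p s) = F x + s * L + s\<^sup>2 * Q" for s
    proof -
      have "F (p s) = F (\<lambda>j. x j + s *\<^sub>R (z j - x j))"
        unfolding F_def by (rule Phi_cong) (simp add: p_def)
      also have "\<dots> = F x + (\<Sum>j=1..n. 2 * w j * ((SS n w x0 x - t j) \<bullet> (s *\<^sub>R (z j - x j))))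
        + (norm (\<Sum>j=1..n. w j *\<^sub>R (s *\<^sub>R (z j - x j))))\<^sup>2"
        unfolding F_def by (rule Phi_expand)
      also have "(\<Sum>j=1..n. 2 * w j * ((SS n w x0 x - t j) \<bullet> (s *\<^sub>R (z j - x j)))) = s * L"
        unfolding L_def by (simp add: sum_distrib_left algebra_simps)
      also have "(\<Sum>j=1..n. w j *\<^sub>R (s *\<^sub>R (z j - x j))) = s *\<^sub>R (\<Sum>j=1..n. w j *\<^sub>R (z j - x j))"
        by (simp add: scaleR_sum_right mult.commute)
      also have "(norm (s *\<^sub>R (\<Sum>j=1..n. w j *\<^sub>R (z j - x j))))\<^sup>2 = s\<^sup>2 * Q"
        unfolding Q_def by (simp add: power_mult_distrib)
      finally show ?thesis .
    qed
    have pz: "p 1 = z" using zP unfolding p_def P_def by (auto simp: PiE_iff extensional_def)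
    have LQ: "L + Q = 0" using Fp[of 1] Fxz pz by simp
    have pNE: "p s \<in> NE" if s: "s \<in> {0..1}" for s
    proof -
      have pP: "p s \<in> P"
      proof -
        have "x j + s *\<^sub>R (z j - x j) \<in> X" if "j \<in> {1..n}" for j
        proof -
          have "x j \<in> X" "z j \<in> X" using PiE_mem[OF xP[unfolded P_def] that] PiE_mem[OF zP[unfolded P_def] that] by auto
          from convexD_alt[OF assms(3) this, of s] s show ?thesis by (simp add: algebra_simps)
        qed
        then show ?thesis unfolding p_def P_def by auto
      qed
      have "Q \<ge> 0" unfolding Q_def by simp
      have "s\<^sup>2 * Q \<le> s * Q"
      proof -
        have "s * s \<le> s * 1" using s by (intro mult_left_mono) auto
        then have "s\<^sup>2 \<le> s" by (simp add: power2_eq_square)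
        then show ?thesis using \<open>Q \<ge> 0\<close> by (rule mult_right_mono)
      qed
      moreover have "L = - Q" using LQ by linarith
      then have "F (p s) = F x - s * Q + s\<^sup>2 * Q" using Fp[of s] by simp
      ultimately have "F (p s) \<le> F x" by linarith
      moreover have "\<forall>y\<in>P. F x \<le> F y" using x NE_eq by simp
      ultimately show ?thesis using pP NE_eq by (simp add: order_trans)
    qed
    have "inj_on p {0..1}"
    proof (rule inj_onI)
      fix a b assume "a \<in> {0..1::real}" "b \<in> {0..1::real}" "p a = p b"
      then have "x k + a *\<^sub>R (z k - x k) = x k + b *\<^sub>R (z k - x k)"
        using k(1) fun_cong[OF \<open>p a = p b\<close>, of k] unfolding p_def by simp
      then have "(a - b) *\<^sub>R (z k - x k) = 0" by (simp add: algebra_simps)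
      then show "a = b" using k(2) by simp
    qed
    then have "infinite (p ` {0..1})" using infinite_Icc[of "0::real" 1] finite_image_iff[of p "{0..1::real}"] by simp
    moreover have "p ` {0..1} \<subseteq> NE" using pNE by auto
    ultimately show ?thesis using finite_subset by blast
  qed
  have "card NE = 1 \<or> infinite NE"
  proof (cases "finite NE")
    case True
    have "card NE = 1"
    proof (rule ccontr)
      assume "card NE \<noteq> 1"
      moreover have "card NE \<noteq> 0" using True ne by simp
      ultimately have "card NE \<ge> 2" by linarith
      obtain a where a: "a \<in> NE" using ne by blast
      have "card (NE - {a}) \<ge> 1" using a True \<open>card NE \<ge> 2\<close> by simp
      then obtain b where "b \<in> NE - {a}" by (metis card.empty all_not_in_conv not_one_le_zero)
      then have "a \<in> NE" "b \<in> NE" "a \<noteq> b" using a by auto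
      then show False using inf True by blast
    qed
    then show ?thesis by simp
  qed simp
  then show ?thesis unfolding NE_def .
qed

end
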